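(* Let $(\mathcal{A},\mathcal{E})$ be a finite, essentially small exact category. For a nonzero object $X$ define $\mu_\mathcal{E}(X)=\max\{\mu_\mathcal{E}(X') : X'\text{ indecomposable},\ X'\subset_\mathcal{E}X\}$ (maximum in $(\mathfrak{S}(\mathbb{N}),\lll)$); this agrees with $\mu_\mathcal{E}$ on indecomposable objects. Then this extended map is a measure on the poset of isomorphism classes of nonzero objects ordered by $\subset_\mathcal{E}$, i.e. $X\subset_\mathcal{E}Y$ implies $\mu_\mathcal{E}(X)\lll\mu_\mathcal{E}(Y)$.
   Context: $(\mathcal{A},\mathcal{E})$ is a Quillen exact category; admissible monics are morphisms $i$ with $(i,d)\in\mathcal{E}$ for some $d$. $X\subset_\mathcal{E}Y$ means there is an admissible monic $X\to Y$; $X\subsetneq_\mathcal{E}Y$ means there is one that is not an isomorphism. The $\mathcal{E}$-length $l_\mathcal{E}(X)$ is the supremum of all $n$ such that there is a chain $0=X_0\to\cdots\to X_n=X$ of admissible monics none of which is an isomorphism; $(\mathcal{A},\mathcal{E})$ is finite if $l_\mathcal{E}(X)<\infty$ for all $X$; in that case $\subset_\mathcal{E}$ is a partial order on isomorphism classes. $\mathfrak{S}(\mathbb{N})$ is the set of finite nonempty sequences of natural numbers, totally ordered by: $x\lll y$ iff $x=y$, or $x$ is a proper prefix of $y$, or at the first index $i$ where $x_i\neq y_i$ (both defined) one has $x_i>y_i$. For indecomposable $X$, $\mu_\mathcal{E}(X)$ is the $\lll$-maximum of $(l_\mathcal{E}(X_1),\dots,l_\mathcal{E}(X_n))$ over all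 chains $X_1\subsetneq_\mathcal{E}\cdots\subsetneq_\mathcal{E}X_n=X$ ($n\ge1$) with all $X_i$ indecomposable. A measure is an order-preserving map from a poset to a totally ordered set. *)

theory Defs
  imports Main "HOL-Library.Extended_Nat"
begin

text \<open>An (essentially small) category is given by a set of objects and a set of morphisms
  with source, target, composition and identities; the additive structure is given by
  addition of parallel morphisms and zero morphisms; the exact structure is a set of
  composable pairs (i, d) of morphisms (the conflations / kernel-cokernel pairs).\<close>

record ('o, 'm) excat =
  ob    :: "'o set"
  mor   :: "'m set"
  src   :: "'m \<Rightarrow> 'o"
  tgt   :: "'m \<Rightarrow> 'o"
  cmp   :: "'m \<Rightarrow> 'm \<Rightarrow> 'm"     (* cmp C g f = g o f *)
  idt   :: "'o \<Rightarrow> 'm"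
  madd  :: "'m \<Rightarrow> 'm \<Rightarrow> 'm"
  mzero :: "'o \<Rightarrow> 'o \<Rightarrow> 'm"
  ex    :: "('m \<times> 'm) set"

definition hom :: "('o, 'm, 'x) excat_scheme \<Rightarrow> 'o \<Rightarrow> 'o \<Rightarrow> 'm set" where
  "hom C X Y = {f \<in> mor C. src C f = X \<and> tgt C f = Y}"

definition is_category :: "('o, 'm, 'x) excat_scheme \<Rightarrow> bool" where
  "is_category C \<longleftrightarrow>
     (\<forall>f \<in> mor C. src C f \<in> ob C \<and> tgt C f \<in> ob C) \<and>
     (\<forall>X \<in> ob C. idt C X \<in> hom C X X) \<and>
     (\<forall>X \<in> ob C. \<forall>Y \<in> ob C. \<forall>Z \<in> ob C. \<forall>f \<in> hom C X Y. \<forall>g \<in> hom C Y Z.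
        cmp C g f \<in> hom C X Z) \<and>
     (\<forall>W \<in> ob C. \<forall>X \<in> ob C. \<forall>Y \<in> ob C. \<forall>Z \<in> ob C.
        \<forall>f \<in> hom C W X. \<forall>g \<in> hom C X Y. \<forall>h \<in> hom C Y Z.
        cmp C h (cmp C g f) = cmp C (cmp C h g) f) \<and>
     (\<forall>X \<in> ob C. \<forall>Y \<in> ob C. \<forall>f \<in> hom C X Y.
        cmp C f (idt C X) = f \<and> cmp C (idt C Y) f = f)"

definition is_preadditive :: "('o, 'm, 'x) excat_scheme \<Rightarrow> bool" where
  "is_preadditive C \<longleftrightarrow> is_category C \<and>
     (\<forall>X \<in> ob C. \<forall>Y \<in> ob C.
        mzero C X Y \<in> hom C X Y \<and>
        (\<forall>f \<in> hom C X Y. \<forall>g \<in> hom C X Y. madd C f g \<in> hom C X Y) \<and>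
        (\<forall>f \<in> hom C X Y. \<forall>g \<in> hom C X Y. \<forall>h \<in> hom C X Y.
           madd C (madd C f g) h = madd C f (madd C g h)) \<and>
        (\<forall>f \<in> hom C X Y. \<forall>g \<in> hom C X Y. madd C f g = madd C g f) \<and>
        (\<forall>f \<in> hom C X Y. madd C f (mzero C X Y) = f) \<and>
        (\<forall>f \<in> hom C X Y. \<exists>g \<in> hom C X Y. madd C f g = mzero C X Y)) \<and>
     (\<forall>X \<in> ob C. \<forall>Y \<in> ob C. \<forall>Z \<in> ob C.
        (\<forall>f \<in> hom C X Y. \<forall>f' \<in> hom C X Y. \<forall>g \<in> hom C Y Z.
           cmp C g (madd C f f') = madd C (cmp C g f) (cmp C g f')) \<and>
        (\<forall>f \<in> hom C X Y. \<forall>g \<in> hom C Y Z. \<forall>g' \<in> hom C Y Z.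
           cmp C (madd C g g') f = madd C (cmp C g f) (cmp C g' f)))"

definition is_zero_obj :: "('o, 'm, 'x) excat_scheme \<Rightarrow> 'o \<Rightarrow> bool" where
  "is_zero_obj C Z \<longleftrightarrow> Z \<in> ob C \<and>
     (\<forall>X \<in> ob C. (\<exists>!f. f \<in> hom C Z X) \<and> (\<exists>!f. f \<in> hom C X Z))"

definition is_biproduct ::
  "('o, 'm, 'x) excat_scheme \<Rightarrow> 'o \<Rightarrow> 'o \<Rightarrow> 'o \<Rightarrow> 'm \<Rightarrow> 'm \<Rightarrow> 'm \<Rightarrow> 'm \<Rightarrow> bool" where
  "is_biproduct C A B S i1 i2 p1 p2 \<longleftrightarrow>
     A \<in> ob C \<and> B \<in> ob C \<and> S \<in> ob C \<and>
     i1 \<in> hom C A S \<and> i2 \<in> hom C B S \<and> p1 \<in> hom C S A \<and> p2 \<in> hom C S B \<and>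
     cmp C p1 i1 = idt C A \<and> cmp C p2 i2 = idt C B \<and>
     cmp C p1 i2 = mzero C B A \<and> cmp C p2 i1 = mzero C A B \<and>
     madd C (cmp C i1 p1) (cmp C i2 p2) = idt C S"

definition is_additive :: "('o, 'm, 'x) excat_scheme \<Rightarrow> bool" where
  "is_additive C \<longleftrightarrow> is_preadditive C \<and>
     (\<exists>Z. is_zero_obj C Z) \<and>
     (\<forall>A \<in> ob C. \<forall>B \<in> ob C. \<exists>S i1 i2 p1 p2. is_biproduct C A B S i1 i2 p1 p2)"

definition is_iso :: "('o, 'm, 'x) excat_scheme \<Rightarrow> 'm \<Rightarrow> bool" where
  "is_iso C f \<longleftrightarrow> f \<in> mor C \<and>
     (\<exists>g \<in> hom C (tgt C f) (src C f).
        cmp C g f = idt C (src C f) \<and> cmp C f g = idt C (tgt C f))"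

definition is_kernel :: "('o, 'm, 'x) excat_scheme \<Rightarrow> 'm \<Rightarrow> 'm \<Rightarrow> bool" where
  "is_kernel C i d \<longleftrightarrow> i \<in> mor C \<and> d \<in> mor C \<and> tgt C i = src C d \<and>
     cmp C d i = mzero C (src C i) (tgt C d) \<and>
     (\<forall>T \<in> ob C. \<forall>f \<in> hom C T (src C d). cmp C d f = mzero C T (tgt C d) \<longrightarrow>
        (\<exists>!g. g \<in> hom C T (src C i) \<and> cmp C i g = f))"

definition is_cokernel :: "('o, 'm, 'x) excat_scheme \<Rightarrow> 'm \<Rightarrow> 'm \<Rightarrow> bool" where
  "is_cokernel C d i \<longleftrightarrow> i \<in> mor C \<and> d \<in> mor C \<and> tgt C i = src C d \<and>
     cmp C d i = mzero C (src C i) (tgt C d) \<and>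
     (\<forall>T \<in> ob C. \<forall>f \<in> hom C (tgt C i) T. cmp C f i = mzero C (src C i) T \<longrightarrow>
        (\<exists>!g. g \<in> hom C (tgt C d) T \<and> cmp C g d = f))"

definition is_kernel_cokernel_pair :: "('o, 'm, 'x) excat_scheme \<Rightarrow> 'm \<Rightarrow> 'm \<Rightarrow> bool" where
  "is_kernel_cokernel_pair C i d \<longleftrightarrow> is_kernel C i d \<and> is_cokernel C d i"

definition pairs_iso :: "('o, 'm, 'x) excat_scheme \<Rightarrow> 'm \<times> 'm \<Rightarrow> 'm \<times> 'm \<Rightarrow> bool" where
  "pairs_iso C p q \<longleftrightarrow> (case p of (i, d) \<Rightarrow> case q of (i', d') \<Rightarrow>
     (\<exists>a b c. is_iso C a \<and> is_iso C b \<and> is_iso C c \<and>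
        a \<in> hom C (src C i) (src C i') \<and> b \<in> hom C (tgt C i) (tgt C i') \<and>
        c \<in> hom C (tgt C d) (tgt C d') \<and>
        cmp C b i = cmp C i' a \<and> cmp C c d = cmp C d' b))"

definition adm_mono :: "('o, 'm, 'x) excat_scheme \<Rightarrow> 'm \<Rightarrow> bool" where
  "adm_mono C i \<longleftrightarrow> (\<exists>d. (i, d) \<in> ex C)"

definition adm_epi :: "('o, 'm, 'x) excat_scheme \<Rightarrow> 'm \<Rightarrow> bool" where
  "adm_epi C d \<longleftrightarrow> (\<exists>i. (i, d) \<in> ex C)"

definition is_pushout :: "('o, 'm, 'x) excat_scheme \<Rightarrow> 'm \<Rightarrow> 'm \<Rightarrow> 'm \<Rightarrow> 'm \<Rightarrow> bool" where
  "is_pushout C i f i' f' \<longleftrightarrow>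
     i \<in> mor C \<and> f \<in> mor C \<and> i' \<in> mor C \<and> f' \<in> mor C \<and>
     src C f = src C i \<and> src C i' = tgt C f \<and> src C f' = tgt C i \<and> tgt C i' = tgt C f' \<and>
     cmp C f' i = cmp C i' f \<and>
     (\<forall>T \<in> ob C. \<forall>g \<in> hom C (tgt C f) T. \<forall>h \<in> hom C (tgt C i) T.
        cmp C h i = cmp C g f \<longrightarrow>
        (\<exists>!u. u \<in> hom C (tgt C i') T \<and> cmp C u i' = g \<and> cmp C u f' = h))"

definition is_pullback :: "('o, 'm, 'x) excat_scheme \<Rightarrow> 'm \<Rightarrow> 'm \<Rightarrow> 'm \<Rightarrow> 'm \<Rightarrow> bool" where
  "is_pullback C d f d' f' \<longleftrightarrow>
     d \<in> mor C \<and> f \<in> mor C \<and> d' \<in> mor C \<and> f' \<in> mor C \<and>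
     tgt C f = tgt C d \<and> tgt C d' = src C f \<and> tgt C f' = src C d \<and> src C d' = src C f' \<and>
     cmp C d f' = cmp C f d' \<and>
     (\<forall>T \<in> ob C. \<forall>g \<in> hom C T (src C f). \<forall>h \<in> hom C T (src C d).
        cmp C d h = cmp C f g \<longrightarrow>
        (\<exists>!u. u \<in> hom C T (src C d') \<and> cmp C d' u = g \<and> cmp C f' u = h))"

text \<open>Quillen exact category (axioms as in Buehler, "Exact categories", Def. 2.1).\<close>
definition exact_category :: "('o, 'm, 'x) excat_scheme \<Rightarrow> bool" where
  "exact_category C \<longleftrightarrow> is_additive C \<and>
     (\<forall>(i, d) \<in> ex C. is_kernel_cokernel_pair C i d) \<and>
     (\<forall>p \<in> ex C. \<forall>i d. is_kernel_cokernel_pair C i d \<and> pairs_iso C p (i, d) \<longrightarrow> (i, d) \<in> ex C) \<and>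
     (\<forall>X \<in> ob C. adm_mono C (idt C X)) \<and>
     (\<forall>X \<in> ob C. adm_epi C (idt C X)) \<and>
     (\<forall>i j. adm_mono C i \<and> adm_mono C j \<and> tgt C i = src C j \<longrightarrow> adm_mono C (cmp C j i)) \<and>
     (\<forall>d e. adm_epi C d \<and> adm_epi C e \<and> tgt C d = src C e \<longrightarrow> adm_epi C (cmp C e d)) \<and>
     (\<forall>i f. adm_mono C i \<and> f \<in> mor C \<and> src C f = src C i \<longrightarrow>
        (\<exists>i' f'. is_pushout C i f i' f' \<and> adm_mono C i')) \<and>
     (\<forall>d f. adm_epi C d \<and> f \<in> mor C \<and> tgt C f = tgt C d \<longrightarrow>
        (\<exists>d' f'. is_pullback C d f d' f' \<and> adm_epi C d'))"

definition adm_sub :: "('o, 'm, 'x) excat_scheme \<Rightarrow> 'o \<Rightarrow> 'o \<Rightarrow> bool" where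
  "adm_sub C X Y \<longleftrightarrow> (\<exists>i \<in> hom C X Y. adm_mono C i)"

definition adm_psub :: "('o, 'm, 'x) excat_scheme \<Rightarrow> 'o \<Rightarrow> 'o \<Rightarrow> bool" where
  "adm_psub C X Y \<longleftrightarrow> (\<exists>i \<in> hom C X Y. adm_mono C i \<and> \<not> is_iso C i)"

text \<open>A chain 0 = X_0 \<rightarrow> ... \<rightarrow> X_n = X of non-isomorphic admissible monics, as the list
  [X_0, ..., X_n] (of length n+1).\<close>
definition length_chain :: "('o, 'm, 'x) excat_scheme \<Rightarrow> 'o \<Rightarrow> 'o list \<Rightarrow> bool" where
  "length_chain C X xs \<longleftrightarrow> xs \<noteq> [] \<and> set xs \<subseteq> ob C \<and>
     is_zero_obj C (hd xs) \<and> last xs = X \<and>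
     (\<forall>k. Suc k < length xs \<longrightarrow> adm_psub C (xs ! k) (xs ! Suc k))"

definition E_length :: "('o, 'm, 'x) excat_scheme \<Rightarrow> 'o \<Rightarrow> enat" where
  "E_length C X = (SUP xs \<in> {xs. length_chain C X xs}. enat (length xs - 1))"

definition finite_exact :: "('o, 'm, 'x) excat_scheme \<Rightarrow> bool" where
  "finite_exact C \<longleftrightarrow> (\<forall>X \<in> ob C. E_length C X < \<infinity>)"

definition indecomposable :: "('o, 'm, 'x) excat_scheme \<Rightarrow> 'o \<Rightarrow> bool" where
  "indecomposable C X \<longleftrightarrow> X \<in> ob C \<and> \<not> is_zero_obj C X \<and>
     (\<forall>A B i1 i2 p1 p2. is_biproduct C A B X i1 i2 p1 p2 \<longrightarrow>
        is_zero_obj C A \<or> is_zero_obj C B)"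

definition lll :: "nat list \<Rightarrow> nat list \<Rightarrow> bool" where
  "lll x y \<longleftrightarrow> x = y \<or> (\<exists>z. z \<noteq> [] \<and> y = x @ z) \<or>
     (\<exists>i < min (length x) (length y). take i x = take i y \<and> x ! i > y ! i)"

definition lll_max :: "nat list set \<Rightarrow> nat list" where
  "lll_max S = (THE s. s \<in> S \<and> (\<forall>t \<in> S. lll t s))"

definition mu_ind :: "('o, 'm, 'x) excat_scheme \<Rightarrow> 'o \<Rightarrow> nat list" where
  "mu_ind C X = lll_max
     {map (\<lambda>Y. the_enat (E_length C Y)) xs | xs.
        xs \<noteq> [] \<and> last xs = X \<and> (\<forall>Y \<in> set xs. indecomposable C Y) \<and>
        (\<forall>k. Suc k < length xs \<longrightarrow> adm_psub C (xs ! k) (xs ! Suc k))}"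

definition mu_ext :: "('o, 'm, 'x) excat_scheme \<Rightarrow> 'o \<Rightarrow> nat list" where
  "mu_ext C X = lll_max {mu_ind C X' | X'. indecomposable C X' \<and> adm_sub C X' X}"

end

theory Submission imports Defs "HOL-Library.List_Lexorder" begin

definition negl :: "nat list \<Rightarrow> int list" where
  "negl x = map (\<lambda>n. - int n) x"

lemma inj_negl: "inj negl"
  unfolding negl_def by (rule inj_mapI) (auto simp: inj_def)

lemma take_negl: "take i (negl x) = take i (negl y) \<longleftrightarrow> take i x = take i y"
  using inj_negl unfolding negl_def take_map[symmetric] inj_def by (metis take_map)

lemma nth_negl: "i < length x \<Longrightarrow> negl x ! i = - int (x ! i)"
  by (simp add: negl_def)

lemma lll_iff: "lll x y \<longleftrightarrow> negl x \<le> negl y"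
proof -
  have a: "(\<exists>z. z \<noteq> [] \<and> y = x @ z) \<longleftrightarrow> (length x < length y \<and> take (length x) y = x)"
    by (metis append_eq_conv_conj append_self_conv length_append less_add_same_cancel1
         length_greater_0_conv linorder_not_less take_all_iff)
  have b: "length (negl x) = length x" "length (negl y) = length y" by (auto simp: negl_def)
  have c: "take (length x) (negl y) = negl x \<longleftrightarrow> take (length x) y = x"
    using take_negl[of "length x" x y] by (auto simp add: negl_def take_map)
  show ?thesis
    unfolding lll_def list_le_def list_less_def lexord_take_index_conv b a
    using take_negl c
    by (auto simp: inj_eq[OF inj_negl] nth_negl)
qed

lemma lll_refl: "lll x x" by (simp add: lll_def)
lemma lll_trans: "lll x y \<Longrightarrow> lll y z \<Longrightarrow> lll x z" by (simp add: lll_iff)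
lemma lll_antisym: "lll x y \<Longrightarrow> lll y x \<Longrightarrow> x = y"
  using inj_negl by (simp add: lll_iff inj_eq)

lemma lll_prefix: "lll s (s @ [a])" by (simp add: lll_def)

lemma lll_max_eq:
  assumes "s \<in> S" "\<forall>t\<in>S. lll t s" shows "lll_max S = s"
  unfolding lll_max_def
  using assms by (intro the_equality) (auto intro: lll_antisym)

lemma lll_max_ex:
  assumes "finite S" "S \<noteq> {}"
  shows "lll_max S \<in> S \<and> (\<forall>t\<in>S. lll t (lll_max S))"
proof -
  have f: "finite (negl ` S)" using assms by simp
  have "Max (negl ` S) \<in> negl ` S" using assms by simp
  then obtain s where s: "s \<in> S" "negl s = Max (negl ` S)" by auto
  have "\<forall>t\<in>S. lll t s" using s f by (simp add: lll_iff)
  with s have "lll_max S = s" by (intro lll_max_eq) auto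
  with s \<open>\<forall>t\<in>S. lll t s\<close> show ?thesis by simp
qed


locale exc =
  fixes C :: "('o, 'm) excat"
  assumes exact: "exact_category C"
begin

lemma additive: "is_additive C" using exact by (simp add: exact_category_def)
lemma pre: "is_preadditive C" using additive by (simp add: is_additive_def)
lemma cat: "is_category C" using pre by (simp add: is_preadditive_def)

lemma in_hom: "f \<in> hom C X Y \<longleftrightarrow> f \<in> mor C \<and> src C f = X \<and> tgt C f = Y"
  by (simp add: hom_def)

lemma hom_ob: "f \<in> hom C X Y \<Longrightarrow> X \<in> ob C \<and> Y \<in> ob C"
  using cat unfolding is_category_def in_hom by auto

lemma mor_hom: "f \<in> mor C \<Longrightarrow> f \<in> hom C (src C f) (tgt C f)"
  by (simp add: in_hom)

lemma id_hom: "X \<in> ob C \<Longrightarrow> idt C X \<in> hom C X X"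
  using cat unfolding is_category_def by auto

lemma cmp_hom: "f \<in> hom C X Y \<Longrightarrow> g \<in> hom C Y Z \<Longrightarrow> cmp C g f \<in> hom C X Z"
  using cat hom_ob unfolding is_category_def by blast

lemma assoc: "f \<in> hom C W X \<Longrightarrow> g \<in> hom C X Y \<Longrightarrow> h \<in> hom C Y Z \<Longrightarrow>
   cmp C h (cmp C g f) = cmp C (cmp C h g) f"
  using cat hom_ob unfolding is_category_def by blast

lemma idl: "f \<in> hom C X Y \<Longrightarrow> cmp C (idt C Y) f = f"
  using cat hom_ob unfolding is_category_def by blast
lemma idr: "f \<in> hom C X Y \<Longrightarrow> cmp C f (idt C X) = f"
  using cat hom_ob unfolding is_category_def by blast

lemma zero_hom: "X \<in> ob C \<Longrightarrow> Y \<in> ob C \<Longrightarrow> mzero C X Y \<in> hom C X Y"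
  using pre unfolding is_preadditive_def by blast
lemma add_hom: "f \<in> hom C X Y \<Longrightarrow> g \<in> hom C X Y \<Longrightarrow> madd C f g \<in> hom C X Y"
  using pre hom_ob unfolding is_preadditive_def by blast
lemma add_assoc: "f \<in> hom C X Y \<Longrightarrow> g \<in> hom C X Y \<Longrightarrow> h \<in> hom C X Y \<Longrightarrow>
   madd C (madd C f g) h = madd C f (madd C g h)"
  using pre hom_ob unfolding is_preadditive_def by blast
lemma add_comm: "f \<in> hom C X Y \<Longrightarrow> g \<in> hom C X Y \<Longrightarrow> madd C f g = madd C g f"
  using pre hom_ob unfolding is_preadditive_def by blast
lemma add_zero: "f \<in> hom C X Y \<Longrightarrow> madd C f (mzero C X Y) = f"
  using pre hom_ob unfolding is_preadditive_def by blast
lemma add_neg: "f \<in> hom C X Y \<Longrightarrow> \<exists>g \<in> hom C X Y. madd C f g = mzero C X Y"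
  using pre hom_ob unfolding is_preadditive_def by blast
lemma distl: "f \<in> hom C X Y \<Longrightarrow> f' \<in> hom C X Y \<Longrightarrow> g \<in> hom C Y Z \<Longrightarrow>
   cmp C g (madd C f f') = madd C (cmp C g f) (cmp C g f')"
  using pre hom_ob unfolding is_preadditive_def by blast
lemma distr: "f \<in> hom C X Y \<Longrightarrow> g \<in> hom C Y Z \<Longrightarrow> g' \<in> hom C Y Z \<Longrightarrow>
   cmp C (madd C g g') f = madd C (cmp C g f) (cmp C g' f)"
  using pre hom_ob unfolding is_preadditive_def by blast

lemma zero_add: "f \<in> hom C X Y \<Longrightarrow> madd C (mzero C X Y) f = f"
  using add_comm add_zero zero_hom hom_ob by metis

lemma idem_zero:
  assumes a: "a \<in> hom C X Y" and aa: "madd C a a = a"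
  shows "a = mzero C X Y"
proof -
  obtain b where b: "b \<in> hom C X Y" "madd C a b = mzero C X Y" using add_neg[OF a] by blast
  have "a = madd C a (madd C a b)" using b add_zero a by simp
  also have "\<dots> = madd C (madd C a a) b" using add_assoc a b by simp
  also have "\<dots> = mzero C X Y" using aa b by simp
  finally show ?thesis .
qed

lemma zero_cmp:
  assumes f: "f \<in> hom C X Y" and Z: "Z \<in> ob C"
  shows "cmp C (mzero C Y Z) f = mzero C X Z"
proof -
  have Y: "Y \<in> ob C" "X \<in> ob C" using hom_ob f by auto
  have z: "mzero C Y Z \<in> hom C Y Z" using zero_hom Y Z by simp
  have "cmp C (mzero C Y Z) f = cmp C (madd C (mzero C Y Z) (mzero C Y Z)) f"
    using add_zero z by simp
  also have "\<dots> = madd C (cmp C (mzero C Y Z) f) (cmp C (mzero C Y Z) f)"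
    using distr f z by simp
  finally show ?thesis using idem_zero cmp_hom f z by metis
qed

lemma cmp_zero:
  assumes g: "g \<in> hom C Y Z" and X: "X \<in> ob C"
  shows "cmp C g (mzero C X Y) = mzero C X Z"
proof -
  have Y: "Y \<in> ob C" "Z \<in> ob C" using hom_ob g by auto
  have z: "mzero C X Y \<in> hom C X Y" using zero_hom Y X by simp
  have "cmp C g (mzero C X Y) = cmp C g (madd C (mzero C X Y) (mzero C X Y))"
    using add_zero z by simp
  also have "\<dots> = madd C (cmp C g (mzero C X Y)) (cmp C g (mzero C X Y))"
    using distl g z by simp
  finally show ?thesis using idem_zero cmp_hom g z by metis
qed


lemma zero_ob: "is_zero_obj C Z \<Longrightarrow> Z \<in> ob C" by (simp add: is_zero_obj_def)

lemma zero_from_uniq: "is_zero_obj C Z \<Longrightarrow> f \<in> hom C Z X \<Longrightarrow> g \<in> hom C Z X \<Longrightarrow> f = g"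
  unfolding is_zero_obj_def using hom_ob by blast
lemma zero_to_uniq: "is_zero_obj C Z \<Longrightarrow> f \<in> hom C X Z \<Longrightarrow> g \<in> hom C X Z \<Longrightarrow> f = g"
  unfolding is_zero_obj_def using hom_ob by blast

lemma zero_by_id:
  assumes X: "X \<in> ob C" and i: "idt C X = mzero C X X"
  shows "is_zero_obj C X"
  unfolding is_zero_obj_def
proof (intro conjI ballI X)
  fix T assume T: "T \<in> ob C"
  show "\<exists>!f. f \<in> hom C X T"
  proof (rule ex1I[of _ "mzero C X T"])
    show "mzero C X T \<in> hom C X T" using zero_hom X T by simp
    fix f assume f: "f \<in> hom C X T"
    have "f = cmp C f (idt C X)" using idr f by simp
    also have "\<dots> = mzero C X T" using i cmp_zero f X by simp
    finally show "f = mzero C X T" .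
  qed
  show "\<exists>!f. f \<in> hom C T X"
  proof (rule ex1I[of _ "mzero C T X"])
    show "mzero C T X \<in> hom C T X" using zero_hom X T by simp
    fix f assume f: "f \<in> hom C T X"
    have "f = cmp C (idt C X) f" using idl f by simp
    also have "\<dots> = mzero C T X" using i zero_cmp f X by simp
    finally show "f = mzero C T X" .
  qed
qed

lemma zero_id: "is_zero_obj C Z \<Longrightarrow> idt C Z = mzero C Z Z"
  using zero_from_uniq id_hom zero_hom zero_ob by metis

lemma isoD:
  assumes "is_iso C f"
  obtains g where "f \<in> hom C (src C f) (tgt C f)" "g \<in> hom C (tgt C f) (src C f)"
    "cmp C g f = idt C (src C f)" "cmp C f g = idt C (tgt C f)"
  using assms unfolding is_iso_def by (auto simp: in_hom)

lemma isoI: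
  assumes "f \<in> hom C X Y" "g \<in> hom C Y X" "cmp C g f = idt C X" "cmp C f g = idt C Y"
  shows "is_iso C f"
  using assms unfolding is_iso_def by (auto simp: in_hom)

lemma id_iso: "X \<in> ob C \<Longrightarrow> is_iso C (idt C X)"
  using isoI id_hom idl by metis

lemma zero_iso:
  assumes K: "is_zero_obj C K" and i: "i \<in> hom C K A" and iso: "is_iso C i"
  shows "is_zero_obj C A"
proof -
  obtain g where g: "g \<in> hom C A K" "cmp C g i = idt C K" "cmp C i g = idt C A"
    using isoD[OF iso] i by (auto simp: in_hom)
  have A: "A \<in> ob C" "K \<in> ob C" using hom_ob i by auto
  have "idt C A = cmp C i (cmp C (idt C K) g)" using g idl by simp
  also have "\<dots> = cmp C i (mzero C A K)" using zero_id K zero_cmp g A by simp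
  also have "\<dots> = mzero C A A" using cmp_zero i A by simp
  finally show ?thesis using zero_by_id A by simp
qed

lemma iso_cancel:
  assumes i: "i \<in> hom C A B" and isoi: "is_iso C i" and j: "j \<in> hom C Z A"
    and isoij: "is_iso C (cmp C i j)"
  shows "is_iso C j"
proof -
  obtain p where p: "p \<in> hom C B A" "cmp C p i = idt C A" "cmp C i p = idt C B"
    using isoD[OF isoi] i by (auto simp: in_hom)
  have ij: "cmp C i j \<in> hom C Z B" using cmp_hom i j by simp
  obtain h where h: "h \<in> hom C B Z" "cmp C h (cmp C i j) = idt C Z" "cmp C (cmp C i j) h = idt C B"
    using isoD[OF isoij] ij by (auto simp: in_hom)
  have hi: "cmp C h i \<in> hom C A Z" using cmp_hom h i by simp
  have 1: "cmp C (cmp C h i) j = idt C Z" using assoc[OF j i h(1)] h by simp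
  have jh: "cmp C j h \<in> hom C B A" using cmp_hom j h by simp
  have "cmp C j (cmp C h i) = cmp C (cmp C j h) i" using assoc[OF i h(1) j] .
  also have "cmp C j h = cmp C (cmp C p i) (cmp C j h)" using p idl jh by simp
  also have "\<dots> = cmp C p (cmp C i (cmp C j h))" using assoc[OF jh i p(1)] by simp
  also have "cmp C i (cmp C j h) = idt C B" using assoc[OF h(1) j i] h by simp
  also have "cmp C p (idt C B) = p" using idr p by simp
  finally have 2: "cmp C j (cmp C h i) = idt C A" using p by simp
  show ?thesis using isoI[OF j hi 1 2] .
qed


lemma ex_kc: "(i, d) \<in> ex C \<Longrightarrow> is_kernel C i d \<and> is_cokernel C d i"
  using exact unfolding exact_category_def is_kernel_cokernel_pair_def by blast

lemma ex_closed: "p \<in> ex C \<Longrightarrow> is_kernel_cokernel_pair C i d \<Longrightarrow> pairs_iso C p (i, d) \<Longrightarrow> (i, d) \<in> ex C"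
  using exact unfolding exact_category_def by blast

lemma id_adm: "X \<in> ob C \<Longrightarrow> adm_mono C (idt C X)"
  using exact unfolding exact_category_def by blast
lemma id_adm_epi: "X \<in> ob C \<Longrightarrow> adm_epi C (idt C X)"
  using exact unfolding exact_category_def by blast
lemma adm_comp: "adm_mono C i \<Longrightarrow> adm_mono C j \<Longrightarrow> tgt C i = src C j \<Longrightarrow> adm_mono C (cmp C j i)"
  using exact unfolding exact_category_def by blast
lemma pushout_ax: "adm_mono C i \<Longrightarrow> f \<in> mor C \<Longrightarrow> src C f = src C i \<Longrightarrow>
   \<exists>i' f'. is_pushout C i f i' f' \<and> adm_mono C i'"
  using exact unfolding exact_category_def by blast

lemma adm_mor: "adm_mono C i \<Longrightarrow> i \<in> mor C"
  using ex_kc unfolding adm_mono_def is_kernel_def by blast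

lemma adm_iso_comp:
  assumes je: "(j, e) \<in> ex C" and iso: "is_iso C \<phi>" and s: "src C \<phi> = tgt C j"
  shows "adm_mono C (cmp C \<phi> j)"
proof -
  have kj: "is_kernel C j e" and ce: "is_cokernel C e j" using ex_kc[OF je] by auto
  define A X Q Y where "A = src C j" "X = tgt C j" "Q = tgt C e" "Y = tgt C \<phi>"
  have j: "j \<in> hom C A X" using kj unfolding is_kernel_def A_X_Q_Y_def in_hom by auto
  have e: "e \<in> hom C X Q" using kj unfolding is_kernel_def A_X_Q_Y_def in_hom by auto
  obtain \<psi> where \<phi>: "\<phi> \<in> hom C X Y" and \<psi>: "\<psi> \<in> hom C Y X"
    and pf: "cmp C \<psi> \<phi> = idt C X" and fp: "cmp C \<phi> \<psi> = idt C Y"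
    using isoD[OF iso] s unfolding A_X_Q_Y_def by metis
  have ob: "A \<in> ob C" "X \<in> ob C" "Q \<in> ob C" "Y \<in> ob C" using hom_ob j e \<phi> by auto
  define j' e' where "j' = cmp C \<phi> j" "e' = cmp C e \<psi>"
  have j': "j' \<in> hom C A Y" using cmp_hom j \<phi> j'_e'_def by simp
  have e': "e' \<in> hom C Y Q" using cmp_hom e \<psi> j'_e'_def by simp
  have ej: "cmp C e j = mzero C A Q" using kj j e unfolding is_kernel_def in_hom by auto
  have pfj: "cmp C \<psi> j' = j"
    using assoc[OF j \<phi> \<psi>] pf idl j j'_e'_def by simp
  have epf: "cmp C e' \<phi> = e"
    using assoc[OF \<phi> \<psi> e] pf idr e j'_e'_def by simp
  have e'j': "cmp C e' j' = mzero C A Q"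
    using assoc[OF j' \<psi> e] pfj ej j'_e'_def by simp
  have ker: "is_kernel C j' e'"
    unfolding is_kernel_def
  proof (intro conjI ballI impI)
    show "j' \<in> mor C" "e' \<in> mor C" "tgt C j' = src C e'" using j' e' by (auto simp: in_hom)
    show "cmp C e' j' = mzero C (src C j') (tgt C e')" using e'j' j' e' by (auto simp: in_hom)
    fix T f assume T: "T \<in> ob C" and f: "f \<in> hom C T (src C e')"
      and fz: "cmp C e' f = mzero C T (tgt C e')"
    have f: "f \<in> hom C T Y" using f e' by (auto simp: in_hom)
    have pf': "cmp C \<psi> f \<in> hom C T X" using cmp_hom f \<psi> by simp
    have "cmp C e (cmp C \<psi> f) = mzero C T (tgt C e)"
      using assoc[OF f \<psi> e] fz e' j'_e'_def A_X_Q_Y_def by (simp add: in_hom)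
    then obtain g where g: "g \<in> hom C T (src C j)" "cmp C j g = cmp C \<psi> f"
      and gu: "\<And>g'. g' \<in> hom C T (src C j) \<Longrightarrow> cmp C j g' = cmp C \<psi> f \<Longrightarrow> g' = g"
      using kj T pf' e unfolding is_kernel_def by (metis in_hom)
    have gA: "g \<in> hom C T A" using g A_X_Q_Y_def by simp
    show "\<exists>!g. g \<in> hom C T (src C j') \<and> cmp C j' g = f"
    proof (rule ex1I[of _ g])
      have "cmp C j' g = cmp C \<phi> (cmp C j g)" using assoc[OF gA j \<phi>] j'_e'_def by simp
      also have "\<dots> = f" using g assoc[OF f \<psi> \<phi>] fp idl f by simp
      finally show "g \<in> hom C T (src C j') \<and> cmp C j' g = f" using gA j' by (simp add: in_hom)
      fix g' assume g': "g' \<in> hom C T (src C j') \<and> cmp C j' g' = f"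
      have g'A: "g' \<in> hom C T A" using g' j' by (auto simp: in_hom)
      have "cmp C j g' = cmp C \<psi> (cmp C j' g')" using assoc[OF g'A j' \<psi>] pfj by simp
      then show "g' = g" using gu g' g'A A_X_Q_Y_def by simp
    qed
  qed
  have coker: "is_cokernel C e' j'"
    unfolding is_cokernel_def
  proof (intro conjI ballI impI)
    show "j' \<in> mor C" "e' \<in> mor C" "tgt C j' = src C e'" using j' e' by (auto simp: in_hom)
    show "cmp C e' j' = mzero C (src C j') (tgt C e')" using e'j' j' e' by (auto simp: in_hom)
    fix T f assume T: "T \<in> ob C" and f: "f \<in> hom C (tgt C j') T"
      and fz: "cmp C f j' = mzero C (src C j') T"
    have f: "f \<in> hom C Y T" using f j' by (auto simp: in_hom)
    have fp': "cmp C f \<phi> \<in> hom C X T" using cmp_hom f \<phi> by simp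
    have "cmp C (cmp C f \<phi>) j = mzero C (src C j) T"
      using assoc[OF j \<phi> f] fz j' j'_e'_def A_X_Q_Y_def by (simp add: in_hom)
    then obtain h where h: "h \<in> hom C (tgt C e) T" "cmp C h e = cmp C f \<phi>"
      and hu: "\<And>h'. h' \<in> hom C (tgt C e) T \<Longrightarrow> cmp C h' e = cmp C f \<phi> \<Longrightarrow> h' = h"
      using ce T fp' j unfolding is_cokernel_def by (metis in_hom A_X_Q_Y_def)
    have hQ: "h \<in> hom C Q T" using h A_X_Q_Y_def by simp
    show "\<exists>!h. h \<in> hom C (tgt C e') T \<and> cmp C h e' = f"
    proof (rule ex1I[of _ h])
      have "cmp C h e' = cmp C (cmp C h e) \<psi>" using assoc[OF \<psi> e hQ] j'_e'_def by simp
      also have "\<dots> = f" using h assoc[OF \<psi> \<phi> f] fp idr f by simp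
      finally show "h \<in> hom C (tgt C e') T \<and> cmp C h e' = f" using hQ e' by (simp add: in_hom)
      fix h' assume h': "h' \<in> hom C (tgt C e') T \<and> cmp C h' e' = f"
      have h'Q: "h' \<in> hom C Q T" using h' e' by (auto simp: in_hom)
      have "cmp C h' e = cmp C (cmp C h' e') \<phi>" using assoc[OF \<phi> e' h'Q] epf by simp
      then show "h' = h" using hu h' h'Q A_X_Q_Y_def by simp
    qed
  qed
  have pi: "pairs_iso C (j, e) (j', e')"
    unfolding pairs_iso_def
  proof (simp, intro exI conjI)
    show "is_iso C (idt C A)" "is_iso C \<phi>" "is_iso C (idt C Q)" using id_iso ob iso by auto
    show "idt C A \<in> hom C (src C j) (src C j')" using id_hom ob j j' by (simp add: in_hom)
    show "\<phi> \<in> hom C (tgt C j) (tgt C j')" using \<phi> j j' by (simp add: in_hom)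
    show "idt C Q \<in> hom C (tgt C e) (tgt C e')" using id_hom ob e e' by (simp add: in_hom)
    show "cmp C \<phi> j = cmp C j' (idt C A)" using idr j' j'_e'_def by simp
    show "cmp C (idt C Q) e = cmp C e' \<phi>" using idl e epf by simp
  qed
  have "(j', e') \<in> ex C"
    using ex_closed[OF je _ pi] ker coker by (simp add: is_kernel_cokernel_pair_def)
  then show ?thesis unfolding adm_mono_def j'_e'_def by blast
qed

lemma iso_adm:
  assumes iso: "is_iso C \<phi>" shows "adm_mono C \<phi>"
proof -
  have f: "\<phi> \<in> hom C (src C \<phi>) (tgt C \<phi>)" using iso by (auto simp: is_iso_def in_hom)
  then have X: "src C \<phi> \<in> ob C" using hom_ob by blast
  obtain e where e: "(idt C (src C \<phi>), e) \<in> ex C" using id_adm[OF X] by (auto simp: adm_mono_def)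
  have "tgt C (idt C (src C \<phi>)) = src C \<phi>" using id_hom X by (simp add: in_hom)
  then have "adm_mono C (cmp C \<phi> (idt C (src C \<phi>)))" using adm_iso_comp[OF e iso] by simp
  then show ?thesis using idr f by simp
qed


lemma zero_sub:
  assumes B: "B \<in> ob C"
  shows "\<exists>K k. is_zero_obj C K \<and> k \<in> hom C K B \<and> adm_mono C k"
proof -
  obtain k where kd: "(k, idt C B) \<in> ex C" using id_adm_epi[OF B] by (auto simp: adm_epi_def)
  have ker: "is_kernel C k (idt C B)" using ex_kc[OF kd] by simp
  have idB: "idt C B \<in> hom C B B" using id_hom B by simp
  define K where "K = src C k"
  have k: "k \<in> hom C K B" using ker idB unfolding is_kernel_def K_def by (auto simp: in_hom)
  have K: "K \<in> ob C" using hom_ob k by simp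
  have sk: "src C k = K" using K_def by simp
  have "cmp C (idt C B) k = mzero C (src C k) (tgt C (idt C B))" using ker unfolding is_kernel_def by blast
  then have kz: "k = mzero C K B" using idl[OF k] idB sk by (simp add: in_hom)
  have zKB: "mzero C K B \<in> hom C K B" using zero_hom K B by simp
  have "cmp C (idt C B) (mzero C K B) = mzero C K (tgt C (idt C B))"
    using idl[OF zKB] idB by (simp add: in_hom)
  moreover have "\<forall>T \<in> ob C. \<forall>f \<in> hom C T (src C (idt C B)). cmp C (idt C B) f = mzero C T (tgt C (idt C B)) \<longrightarrow>
        (\<exists>!g. g \<in> hom C T (src C k) \<and> cmp C k g = f)" using ker unfolding is_kernel_def by blast
  moreover have "src C (idt C B) = B" "tgt C (idt C B) = B" using idB by (auto simp: in_hom)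
  ultimately have u: "\<exists>!g. g \<in> hom C K (src C k) \<and> cmp C k g = mzero C K B"
    using K zKB by auto
  have a: "idt C K \<in> hom C K (src C k) \<and> cmp C k (idt C K) = mzero C K B"
    using id_hom K idr k kz sk by simp
  have b: "mzero C K K \<in> hom C K (src C k) \<and> cmp C k (mzero C K K) = mzero C K B"
    using zero_hom K cmp_zero k kz sk by simp
  have "idt C K = mzero C K K" using u a b by blast
  then have "is_zero_obj C K" using zero_by_id K by simp
  moreover have "adm_mono C k" unfolding adm_mono_def using kd by blast
  ultimately show ?thesis using k by (intro exI conjI)
qed

lemma biprod_hom:
  assumes "is_biproduct C A B S i1 i2 p1 p2"
  shows "A \<in> ob C" "B \<in> ob C" "S \<in> ob C" "i1 \<in> hom C A S" "i2 \<in> hom C B S"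
    "p1 \<in> hom C S A" "p2 \<in> hom C S B"
    "cmp C p1 i1 = idt C A" "cmp C p2 i2 = idt C B"
    "cmp C p1 i2 = mzero C B A" "cmp C p2 i1 = mzero C A B"
    "madd C (cmp C i1 p1) (cmp C i2 p2) = idt C S"
  using assms unfolding is_biproduct_def by auto

lemma biprod_adm:
  assumes bp: "is_biproduct C A B S i1 i2 p1 p2"
  shows "adm_mono C i1"
proof -
  note b = biprod_hom[OF bp]
  obtain K k where K: "is_zero_obj C K" and k: "k \<in> hom C K B" and ka: "adm_mono C k"
    using zero_sub b(2) by blast
  have Kob: "K \<in> ob C" using zero_ob K by simp
  define f where "f = mzero C K A"
  have f: "f \<in> hom C K A" using zero_hom Kob b(1) f_def by simp
  obtain i' f' where po: "is_pushout C k f i' f'" and ia: "adm_mono C i'"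
  proof -
    have "f \<in> mor C" "src C f = src C k" using f k by (auto simp: in_hom)
    then show ?thesis using pushout_ax[OF ka] that by blast
  qed
  define P where "P = tgt C i'"
  have i': "i' \<in> hom C A P" and f': "f' \<in> hom C B P" and sq: "cmp C f' k = cmp C i' f"
    using po f k unfolding is_pushout_def P_def by (auto simp: in_hom)
  have tf: "tgt C f = A" "tgt C k = B" using f k by (auto simp: in_hom)
  have univ: "\<And>T g h. T \<in> ob C \<Longrightarrow> g \<in> hom C A T \<Longrightarrow> h \<in> hom C B T \<Longrightarrow>
       cmp C h k = cmp C g f \<Longrightarrow> \<exists>!u. u \<in> hom C P T \<and> cmp C u i' = g \<and> cmp C u f' = h"
  proof -
    fix T g h assume "T \<in> ob C" "g \<in> hom C A T" "h \<in> hom C B T" "cmp C h k = cmp C g f"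
    moreover have "\<forall>T\<in>ob C. \<forall>g\<in>hom C (tgt C f) T. \<forall>h\<in>hom C (tgt C k) T.
        cmp C h k = cmp C g f \<longrightarrow>
        (\<exists>!u. u \<in> hom C (tgt C i') T \<and> cmp C u i' = g \<and> cmp C u f' = h)"
      using po unfolding is_pushout_def by blast
    ultimately show "\<exists>!u. u \<in> hom C P T \<and> cmp C u i' = g \<and> cmp C u f' = h"
      unfolding tf P_def by blast
  qed
  have Pob: "P \<in> ob C" using hom_ob i' by simp
  have "cmp C i2 k = cmp C i1 f" using zero_from_uniq[OF K cmp_hom[OF k b(5)] cmp_hom[OF f b(4)]] .
  then obtain \<phi> where \<phi>: "\<phi> \<in> hom C P S" "cmp C \<phi> i' = i1" "cmp C \<phi> f' = i2"
    using univ[OF b(3) b(4) b(5)] by blast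
  define \<psi> where "\<psi> = madd C (cmp C i' p1) (cmp C f' p2)"
  have ip: "cmp C i' p1 \<in> hom C S P" using cmp_hom b(6) i' by simp
  have fp: "cmp C f' p2 \<in> hom C S P" using cmp_hom b(7) f' by simp
  have \<psi>: "\<psi> \<in> hom C S P" using add_hom ip fp \<psi>_def by simp
  have 1: "cmp C \<phi> \<psi> = idt C S"
  proof -
    have "cmp C \<phi> \<psi> = madd C (cmp C \<phi> (cmp C i' p1)) (cmp C \<phi> (cmp C f' p2))"
      using distl ip fp \<phi>(1) \<psi>_def by simp
    also have "\<dots> = madd C (cmp C i1 p1) (cmp C i2 p2)"
      using assoc[OF b(6) i' \<phi>(1)] assoc[OF b(7) f' \<phi>(1)] \<phi> by simp
    finally show ?thesis using b by simp
  qed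
  have u1: "cmp C (cmp C \<psi> \<phi>) i' = i'"
  proof -
    have "cmp C (cmp C \<psi> \<phi>) i' = cmp C \<psi> i1" using assoc[OF i' \<phi>(1) \<psi>] \<phi> by simp
    also have "\<dots> = madd C (cmp C (cmp C i' p1) i1) (cmp C (cmp C f' p2) i1)"
      using distr b(4) ip fp \<psi>_def by simp
    also have "\<dots> = madd C (cmp C i' (cmp C p1 i1)) (cmp C f' (cmp C p2 i1))"
      using assoc[OF b(4) b(6) i'] assoc[OF b(4) b(7) f'] by simp
    also have "\<dots> = madd C i' (mzero C A P)"
      using b idr i' cmp_zero f' by simp
    finally show ?thesis using add_zero i' by simp
  qed
  have u2: "cmp C (cmp C \<psi> \<phi>) f' = f'"
  proof -
    have "cmp C (cmp C \<psi> \<phi>) f' = cmp C \<psi> i2" using assoc[OF f' \<phi>(1) \<psi>] \<phi> by simp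
    also have "\<dots> = madd C (cmp C (cmp C i' p1) i2) (cmp C (cmp C f' p2) i2)"
      using distr b(5) ip fp \<psi>_def by simp
    also have "\<dots> = madd C (cmp C i' (cmp C p1 i2)) (cmp C f' (cmp C p2 i2))"
      using assoc[OF b(5) b(6) i'] assoc[OF b(5) b(7) f'] by simp
    also have "\<dots> = madd C (mzero C B P) f'"
      using b idr f' cmp_zero i' by simp
    finally show ?thesis using zero_add f' by simp
  qed
  have "\<exists>!u. u \<in> hom C P P \<and> cmp C u i' = i' \<and> cmp C u f' = f'"
    using univ[OF Pob i' f'] sq by simp
  moreover have "cmp C \<psi> \<phi> \<in> hom C P P" using cmp_hom \<phi>(1) \<psi> by simp
  moreover have "idt C P \<in> hom C P P \<and> cmp C (idt C P) i' = i' \<and> cmp C (idt C P) f' = f'"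
    using id_hom Pob idl i' f' by simp
  ultimately have 2: "cmp C \<psi> \<phi> = idt C P" using u1 u2 by blast
  have iso: "is_iso C \<phi>" using isoI[OF \<phi>(1) \<psi> 2 1] .
  obtain e where e: "(i', e) \<in> ex C" using ia adm_mono_def by metis
  have "src C \<phi> = tgt C i'" using \<phi>(1) i' by (simp add: in_hom)
  then show ?thesis using adm_iso_comp[OF e iso] \<phi> by simp
qed

lemma biprod_noniso:
  assumes bp: "is_biproduct C A B S i1 i2 p1 p2" and nz: "\<not> is_zero_obj C B"
  shows "\<not> is_iso C i1"
proof
  assume iso: "is_iso C i1"
  note b = biprod_hom[OF bp]
  obtain g where g: "g \<in> hom C S A" "cmp C g i1 = idt C A" "cmp C i1 g = idt C S"
    using isoD[OF iso] b(4) by (auto simp: in_hom)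
  have "p1 = cmp C p1 (cmp C i1 g)" using g idr b(6) by simp
  also have "\<dots> = cmp C (idt C A) g" using assoc[OF g(1) b(4) b(6)] b by simp
  also have "\<dots> = g" using idl g by simp
  finally have p1: "p1 = g" .
  have "i2 = cmp C (cmp C i1 p1) i2" using idl b(5) g p1 by simp
  also have "\<dots> = cmp C i1 (mzero C B A)" using assoc[OF b(5) b(6) b(4)] b by simp
  also have "\<dots> = mzero C B S" using cmp_zero b by simp
  finally have "idt C B = cmp C p2 (mzero C B S)" using b by simp
  also have "\<dots> = mzero C B B" using cmp_zero b by simp
  finally show False using zero_by_id b nz by simp
qed


end

lemma consec_snoc:
  assumes "xs \<noteq> []" "\<forall>k. Suc k < length xs \<longrightarrow> R (xs ! k) (xs ! Suc k)" "R (last xs) b"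
  shows "\<forall>k. Suc k < length (xs @ [b]) \<longrightarrow> R ((xs @ [b]) ! k) ((xs @ [b]) ! Suc k)"
proof (intro allI impI)
  fix k assume k: "Suc k < length (xs @ [b])"
  show "R ((xs @ [b]) ! k) ((xs @ [b]) ! Suc k)"
  proof (cases "Suc k < length xs")
    case True then show ?thesis using assms(2) by (simp add: nth_append)
  next
    case False
    then have "k = length xs - 1" using k by simp
    then show ?thesis using assms(1,3) False by (simp add: nth_append last_conv_nth)
  qed
qed

lemma consec_upd:
  assumes "xs \<noteq> []" "\<forall>k. Suc k < length xs \<longrightarrow> R (xs ! k) (xs ! Suc k)"
    "\<And>z. R z (last xs) \<Longrightarrow> R z b"
  shows "\<forall>k. Suc k < length (xs[length xs - 1 := b]) \<longrightarrow>
     R (xs[length xs - 1 := b] ! k) (xs[length xs - 1 := b] ! Suc k)"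
proof (intro allI impI)
  fix k assume k: "Suc k < length (xs[length xs - 1 := b])"
  then have k': "Suc k < length xs" by simp
  show "R (xs[length xs - 1 := b] ! k) (xs[length xs - 1 := b] ! Suc k)"
  proof (cases "Suc k = length xs - 1")
    case False then show ?thesis using assms(2) k' by (simp add: nth_list_update)
  next
    case True
    have "xs ! Suc k = last xs" using True assms(1) by (simp add: last_conv_nth)
    then have "R (xs ! k) (last xs)" using assms(2) k' by metis
    then show ?thesis using True assms(3) k' by (simp add: nth_list_update)
  qed
qed

locale fexc = exc +
  assumes fin: "finite_exact C"
begin

abbreviation L where "L \<equiv> E_length C"

lemma L_lt: "A \<in> ob C \<Longrightarrow> L A < \<infinity>" using fin by (simp add: finite_exact_def)

lemma chain_snoc:
  assumes "length_chain C A xs" "adm_psub C A B" "B \<in> ob C"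
  shows "length_chain C B (xs @ [B])"
  using assms consec_snoc[of xs "adm_psub C"] unfolding length_chain_def by auto

lemma chain_exists:
  assumes A: "A \<in> ob C" shows "\<exists>xs. length_chain C A xs"
proof (cases "is_zero_obj C A")
  case True then show ?thesis using A by (intro exI[of _ "[A]"]) (simp add: length_chain_def)
next
  case False
  obtain K k where K: "is_zero_obj C K" and k: "k \<in> hom C K A" and ka: "adm_mono C k"
    using zero_sub A by blast
  have "\<not> is_iso C k" using zero_iso K k False by blast
  then have "adm_psub C K A" using k ka by (auto simp: adm_psub_def)
  then show ?thesis using A K zero_ob[OF K]
    by (intro exI[of _ "[K, A]"]) (simp add: length_chain_def less_Suc_eq)
qed

lemma chain_le: "length_chain C A xs \<Longrightarrow> enat (length xs - 1) \<le> L A"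
  unfolding E_length_def by (rule SUP_upper) simp

lemma L_attained:
  assumes A: "A \<in> ob C"
  shows "\<exists>xs. length_chain C A xs \<and> L A = enat (length xs - 1)"
proof -
  define S where "S = (\<lambda>xs. enat (length xs - 1)) ` {xs. length_chain C A xs}"
  have ne: "S \<noteq> {}" using chain_exists A S_def by auto
  have L: "L A = Sup S" unfolding E_length_def S_def by simp
  have "finite S" using L_lt[OF A] L ne unfolding Sup_enat_def by (auto split: if_splits)
  then have "Sup S = Max S" using ne unfolding Sup_enat_def by simp
  moreover have "Max S \<in> S" using \<open>finite S\<close> ne by simp
  ultimately show ?thesis using L S_def by auto
qed

lemma L_enat: "A \<in> ob C \<Longrightarrow> L A = enat (the_enat (L A))"
  using L_attained by fastforce

lemma L_less:
  assumes A: "A \<in> ob C" and B: "B \<in> ob C" and p: "adm_psub C A B"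
  shows "L A < L B"
proof -
  obtain xs where xs: "length_chain C A xs" "L A = enat (length xs - 1)" using L_attained A by blast
  have "enat (length (xs @ [B]) - 1) \<le> L B" using chain_le chain_snoc[OF xs(1) p B] by blast
  moreover have "xs \<noteq> []" using xs unfolding length_chain_def by simp
  ultimately show ?thesis using xs(2)
    by (metis Suc_pred' diff_Suc_1 enat_ord_simps(2) length_append_singleton length_greater_0_conv
        lessI order_less_le_trans)
qed

lemma psub_comp:
  assumes p: "adm_psub C Z A" and i: "i \<in> hom C A B" and ia: "adm_mono C i" and iso: "is_iso C i"
  shows "adm_psub C Z B"
proof -
  obtain j where j: "j \<in> hom C Z A" "adm_mono C j" "\<not> is_iso C j" using p unfolding adm_psub_def by blast
  have "cmp C i j \<in> hom C Z B" using cmp_hom j i by blast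
  moreover have "adm_mono C (cmp C i j)" using adm_comp[OF j(2) ia] j i by (simp add: in_hom)
  moreover have "\<not> is_iso C (cmp C i j)" using iso_cancel[OF i iso j(1)] j by blast
  ultimately show ?thesis unfolding adm_psub_def by blast
qed

lemma L_le_iso:
  assumes i: "i \<in> hom C A B" and ia: "adm_mono C i" and iso: "is_iso C i"
  shows "L A \<le> L B"
proof -
  have A: "A \<in> ob C" and B: "B \<in> ob C" using hom_ob i by auto
  obtain xs where xs: "length_chain C A xs" "L A = enat (length xs - 1)" using L_attained A by blast
  have ne: "xs \<noteq> []" and lx: "last xs = A" and hz: "is_zero_obj C (hd xs)" and so: "set xs \<subseteq> ob C"
    and cs: "\<forall>k. Suc k < length xs \<longrightarrow> adm_psub C (xs ! k) (xs ! Suc k)"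
    using xs(1) unfolding length_chain_def by auto
  show ?thesis
  proof (cases "length xs = 1")
    case True then show ?thesis using xs(2) by (simp add: zero_enat_def[symmetric])
  next
    case False
    moreover have "length xs \<noteq> 0" using ne by simp
    ultimately have n: "length xs \<ge> 2" by linarith
    define ys where "ys = xs[length xs - 1 := B]"
    have "length_chain C B ys"
      unfolding length_chain_def
    proof (intro conjI)
      show "ys \<noteq> []" using ne ys_def by simp
      show "set ys \<subseteq> ob C" using so B set_update_subset_insert[of xs "length xs - 1" B] ys_def by blast
      have "hd ys = hd xs" using ne n ys_def by (simp add: hd_conv_nth nth_list_update)
      then show "is_zero_obj C (hd ys)" using hz by simp
      show "last ys = B" using ne ys_def by (simp add: last_conv_nth)
      show "\<forall>k. Suc k < length ys \<longrightarrow> adm_psub C (ys ! k) (ys ! Suc k)"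
        unfolding ys_def using consec_upd[OF ne cs] psub_comp[OF _ i ia iso] lx by blast
    qed
    then have "enat (length ys - 1) \<le> L B" by (rule chain_le)
    then show ?thesis using xs(2) ys_def by simp
  qed
qed

lemma L_mono:
  assumes "adm_sub C A B" shows "L A \<le> L B"
proof -
  obtain i where i: "i \<in> hom C A B" "adm_mono C i" using assms unfolding adm_sub_def by blast
  have A: "A \<in> ob C" and B: "B \<in> ob C" using hom_ob i by auto
  show ?thesis
  proof (cases "is_iso C i")
    case True then show ?thesis using L_le_iso i by blast
  next
    case False
    then have "adm_psub C A B" using i unfolding adm_psub_def by blast
    then show ?thesis using L_less A B by (simp add: order_less_imp_le)
  qed
qed

lemma L_iso_eq:
  assumes i: "i \<in> hom C A B" and ia: "adm_mono C i" and iso: "is_iso C i"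
  shows "L A = L B"
proof -
  obtain g where g: "g \<in> hom C B A" "cmp C g i = idt C A" "cmp C i g = idt C B"
    using isoD[OF iso] i by (auto simp: in_hom)
  have "is_iso C g" using isoI[OF g(1) i g(3) g(2)] .
  then have "L B \<le> L A" using L_le_iso g(1) iso_adm by blast
  then show ?thesis using L_le_iso[OF i ia iso] by simp
qed


definition v where "v A = the_enat (L A)"

lemma indec_ob: "indecomposable C Y \<Longrightarrow> Y \<in> ob C" by (simp add: indecomposable_def)

definition ichain where
  "ichain X xs \<longleftrightarrow> xs \<noteq> [] \<and> last xs = X \<and> (\<forall>Y \<in> set xs. indecomposable C Y) \<and>
        (\<forall>k. Suc k < length xs \<longrightarrow> adm_psub C (xs ! k) (xs ! Suc k))"

definition SS where "SS X = {map v xs | xs. ichain X xs}"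

lemma mu_ind_eq: "mu_ind C X = lll_max (SS X)"
  unfolding mu_ind_def SS_def ichain_def v_def by simp

lemma v_less: "A \<in> ob C \<Longrightarrow> B \<in> ob C \<Longrightarrow> adm_psub C A B \<Longrightarrow> v A < v B"
  using L_less L_enat unfolding v_def by (metis enat_ord_simps(2))

lemma v_mono: "adm_sub C A B \<Longrightarrow> v A \<le> v B"
proof -
  assume a: "adm_sub C A B"
  then have "A \<in> ob C" "B \<in> ob C" using hom_ob unfolding adm_sub_def by blast+
  then show ?thesis using L_mono[OF a] L_enat unfolding v_def by (metis enat_ord_simps(1))
qed

lemma ichain_bound:
  assumes ic: "ichain X xs"
  shows "map v xs \<in> {ys. set ys \<subseteq> {0..v X} \<and> length ys \<le> Suc (v X)}"
proof -
  have ne: "xs \<noteq> []" and lx: "last xs = X" and ind: "\<forall>Y \<in> set xs. indecomposable C Y"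
    and cs: "\<forall>k. Suc k < length xs \<longrightarrow> adm_psub C (xs ! k) (xs ! Suc k)"
    using ic unfolding ichain_def by auto
  define ys where "ys = map v xs"
  have "\<forall>k. Suc k < length ys \<longrightarrow> ys ! k < ys ! Suc k"
  proof (intro allI impI)
    fix k assume k: "Suc k < length ys"
    then have "xs ! k \<in> set xs" "xs ! Suc k \<in> set xs" using ys_def by auto
    then have "xs ! k \<in> ob C" "xs ! Suc k \<in> ob C" using ind indec_ob by auto
    then show "ys ! k < ys ! Suc k" using v_less cs k ys_def by simp
  qed
  then have so: "sorted_wrt (<) ys" by (simp add: sorted_wrt_iff_nth_Suc_transp)
  have lst: "ys ! (length ys - 1) = v X" using ne lx ys_def by (simp add: last_conv_nth)
  have "\<forall>i < length ys. ys ! i \<le> v X"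
  proof (intro allI impI)
    fix i assume i: "i < length ys"
    show "ys ! i \<le> v X"
    proof (cases "i = length ys - 1")
      case True then show ?thesis using lst by simp
    next
      case False
      then have "i < length ys - 1" using i by simp
      then show ?thesis using sorted_wrt_nth_less[OF so, of i "length ys - 1"] lst i by force
    qed
  qed
  then have st: "set ys \<subseteq> {0..v X}" by (auto simp: in_set_conv_nth)
  have "distinct ys" using so strict_sorted_iff by blast
  then have "length ys = card (set ys)" by (simp add: distinct_card)
  also have "\<dots> \<le> card {0..v X}" using st by (intro card_mono) auto
  finally show ?thesis using st ys_def by simp
qed

lemma SS_finite: "finite (SS X)"
proof -
  have "SS X \<subseteq> {ys. set ys \<subseteq> {0..v X} \<and> length ys \<le> Suc (v X)}"
    using ichain_bound unfolding SS_def by blast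
  then show ?thesis using finite_lists_length_le[of "{0..v X}"] finite_subset by blast
qed

lemma SS_ne: "indecomposable C X \<Longrightarrow> [v X] \<in> SS X"
  unfolding SS_def ichain_def by (intro CollectI exI[of _ "[X]"]) simp

lemma mu_ind_max:
  assumes "indecomposable C X"
  shows "mu_ind C X \<in> SS X \<and> (\<forall>t\<in>SS X. lll t (mu_ind C X))"
  using lll_max_ex[OF SS_finite] SS_ne[OF assms] mu_ind_eq by auto

lemma mu_ind_le:
  assumes X': "indecomposable C X'" and X: "indecomposable C X" and s: "adm_sub C X' X"
  shows "lll (mu_ind C X') (mu_ind C X)"
proof -
  obtain xs where xs: "ichain X' xs" and mx: "mu_ind C X' = map v xs"
    using mu_ind_max[OF X'] unfolding SS_def by blast
  have ne: "xs \<noteq> []" and lx: "last xs = X'" and ind: "\<forall>Y \<in> set xs. indecomposable C Y"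
    and cs: "\<forall>k. Suc k < length xs \<longrightarrow> adm_psub C (xs ! k) (xs ! Suc k)"
    using xs unfolding ichain_def by auto
  obtain i where i: "i \<in> hom C X' X" "adm_mono C i" using s unfolding adm_sub_def by blast
  have max: "\<And>t. t \<in> SS X \<Longrightarrow> lll t (mu_ind C X)" using mu_ind_max[OF X] by blast
  show ?thesis
  proof (cases "is_iso C i")
    case False
    then have p: "adm_psub C X' X" using i unfolding adm_psub_def by blast
    have "ichain X (xs @ [X])"
      unfolding ichain_def using ne ind X consec_snoc[OF ne cs] p lx by auto
    then have "map v (xs @ [X]) \<in> SS X" unfolding SS_def by blast
    then have "lll (map v xs @ [v X]) (mu_ind C X)" using max by simp
    then show ?thesis using mx lll_prefix lll_trans by metis
  next
    case True
    define ys where "ys = xs[length xs - 1 := X]"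
    have "ichain X ys"
      unfolding ichain_def
    proof (intro conjI)
      show "ys \<noteq> []" using ne ys_def by simp
      show "last ys = X" using ne ys_def by (simp add: last_conv_nth)
      show "\<forall>Y \<in> set ys. indecomposable C Y"
        using ind X set_update_subset_insert[of xs "length xs - 1" X] ys_def by blast
      show "\<forall>k. Suc k < length ys \<longrightarrow> adm_psub C (ys ! k) (ys ! Suc k)"
        unfolding ys_def using consec_upd[OF ne cs] psub_comp[OF _ i True] lx by blast
    qed
    then have "map v ys \<in> SS X" unfolding SS_def by blast
    moreover have "v X' = v X" using L_iso_eq[OF i True] v_def by simp
    then have "map v ys = map v xs"
    proof -
      assume e: "v X' = v X"
      have "(map v xs) ! (length xs - 1) = v X" using ne lx e by (simp add: last_conv_nth)
      then show ?thesis unfolding ys_def map_update using list_update_id[of "map v xs" "length xs - 1"]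
        by simp
    qed
    ultimately show ?thesis using max mx by simp
  qed
qed


lemma adm_sub_trans:
  assumes "adm_sub C A B" "adm_sub C B D" shows "adm_sub C A D"
proof -
  obtain i where i: "i \<in> hom C A B" "adm_mono C i" using assms(1) unfolding adm_sub_def by blast
  obtain j where j: "j \<in> hom C B D" "adm_mono C j" using assms(2) unfolding adm_sub_def by blast
  have "adm_mono C (cmp C j i)" using adm_comp[OF i(2) j(2)] i j by (simp add: in_hom)
  then show ?thesis using cmp_hom[OF i(1) j(1)] unfolding adm_sub_def by blast
qed

lemma adm_sub_refl: "X \<in> ob C \<Longrightarrow> adm_sub C X X"
  using id_hom id_adm unfolding adm_sub_def by blast

lemma indec_sub_exists:
  assumes X: "X \<in> ob C" and nz: "\<not> is_zero_obj C X"
  shows "\<exists>X'. indecomposable C X' \<and> adm_sub C X' X"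
proof -
  define M where "M = {n. \<exists>X'. X' \<in> ob C \<and> \<not> is_zero_obj C X' \<and> adm_sub C X' X \<and> v X' = n}"
  have "v X \<in> M" using X nz adm_sub_refl unfolding M_def by blast
  then have "(LEAST n. n \<in> M) \<in> M" by (rule LeastI)
  then obtain X' where X': "X' \<in> ob C" "\<not> is_zero_obj C X'" "adm_sub C X' X"
    and vX': "v X' = (LEAST n. n \<in> M)" unfolding M_def by blast
  have "indecomposable C X'"
    unfolding indecomposable_def
  proof (intro conjI allI impI X'(1) X'(2))
    fix A B i1 i2 p1 p2 assume bp: "is_biproduct C A B X' i1 i2 p1 p2"
    show "is_zero_obj C A \<or> is_zero_obj C B"
    proof (rule ccontr)
      assume "\<not> (is_zero_obj C A \<or> is_zero_obj C B)"
      then have nA: "\<not> is_zero_obj C A" and nB: "\<not> is_zero_obj C B" by auto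
      note b = biprod_hom[OF bp]
      have p: "adm_psub C A X'" using b(4) biprod_adm[OF bp] biprod_noniso[OF bp nB]
        unfolding adm_psub_def by blast
      have lt: "v A < v X'" using v_less[OF b(1) X'(1) p] .
      have "adm_sub C A X'" using b(4) biprod_adm[OF bp] unfolding adm_sub_def by blast
      then have "adm_sub C A X" using adm_sub_trans X'(3) by blast
      then have "v A \<in> M" using b(1) nA unfolding M_def by blast
      then have "(LEAST n. n \<in> M) \<le> v A" by (rule Least_le)
      then show False using lt vX' by simp
    qed
  qed
  then show ?thesis using X'(3) by blast
qed

lemma TT_bound:
  assumes "Y \<in> ob C"
  shows "finite {mu_ind C X' | X'. indecomposable C X' \<and> adm_sub C X' Y}"
proof -
  have "{mu_ind C X' | X'. indecomposable C X' \<and> adm_sub C X' Y}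
        \<subseteq> {ys. set ys \<subseteq> {0..v Y} \<and> length ys \<le> Suc (v Y)}"
  proof
    fix t assume "t \<in> {mu_ind C X' | X'. indecomposable C X' \<and> adm_sub C X' Y}"
    then obtain X' where X': "indecomposable C X'" "adm_sub C X' Y" "t = mu_ind C X'" by blast
    obtain xs where xs: "ichain X' xs" "t = map v xs"
      using mu_ind_max[OF X'(1)] X'(3) unfolding SS_def by blast
    have "v X' \<le> v Y" using v_mono X'(2) .
    then show "t \<in> {ys. set ys \<subseteq> {0..v Y} \<and> length ys \<le> Suc (v Y)}"
      using ichain_bound[OF xs(1)] xs(2) by auto
  qed
  then show ?thesis using finite_lists_length_le[of "{0..v Y}"] finite_subset by blast
qed

end

theorem proposition7p16:
  fixes C :: "('o, 'm) excat"
  assumes "exact_category C" and "finite_exact C"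
  shows "(\<forall>X. indecomposable C X \<longrightarrow> mu_ext C X = mu_ind C X) \<and>
         (\<forall>X \<in> ob C. \<forall>Y \<in> ob C. \<not> is_zero_obj C X \<longrightarrow> \<not> is_zero_obj C Y \<longrightarrow>
            adm_sub C X Y \<longrightarrow> lll (mu_ext C X) (mu_ext C Y))"
proof -
  interpret fexc C using assms by (unfold_locales) auto
  have 1: "mu_ext C X = mu_ind C X" if X: "indecomposable C X" for X
    unfolding mu_ext_def
  proof (rule lll_max_eq)
    show "mu_ind C X \<in> {mu_ind C X' | X'. indecomposable C X' \<and> adm_sub C X' X}"
      using X adm_sub_refl indec_ob by blast
    show "\<forall>t\<in>{mu_ind C X' | X'. indecomposable C X' \<and> adm_sub C X' X}. lll t (mu_ind C X)"
      using mu_ind_le X by blast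
  qed
  have 2: "lll (mu_ext C X) (mu_ext C Y)"
    if X: "X \<in> ob C" and Y: "Y \<in> ob C" and nX: "\<not> is_zero_obj C X" and s: "adm_sub C X Y" for X Y
  proof -
    define TX where "TX = {mu_ind C X' | X'. indecomposable C X' \<and> adm_sub C X' X}"
    define TY where "TY = {mu_ind C X' | X'. indecomposable C X' \<and> adm_sub C X' Y}"
    have sub: "TX \<subseteq> TY" unfolding TX_def TY_def using adm_sub_trans s by blast
    have fY: "finite TY" using TT_bound Y TY_def by simp
    have fX: "finite TX" using finite_subset sub fY by blast
    have neX: "TX \<noteq> {}" using indec_sub_exists[OF X nX] TX_def by blast
    have neY: "TY \<noteq> {}" using neX sub by blast
    have "lll_max TX \<in> TX" using lll_max_ex[OF fX neX] by blast
    then show ?thesis using lll_max_ex[OF fY neY] sub unfolding mu_ext_def TX_def[symmetric] TY_def[symmetric]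
      by blast
  qed
  show ?thesis using 1 2 by blast
qed

end
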